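(* Let $a<b$ be real numbers and let $f:[a,b]\to\mathbb{R}$ be an increasing function which is either convex or concave on $[a,b]$. Then for every integer $n\ge1$, $$A_{n+1}\le A_n\qquad\text{and}\qquad B_n\le B_{n+1}.$$
   Context: For a function $f:[a,b]\to\mathbb{R}$ and integers $n\ge1$, put $x_i^{(n)}=a+i\frac{b-a}{n}$ for $i=0,1,\dots,n$, and define the Riemann sums $$A_n=\frac{b-a}{n}\sum_{i=1}^{n} f\big(x_i^{(n)}\big),\qquad B_n=\frac{b-a}{n}\sum_{i=0}^{n-1} f\big(x_i^{(n)}\big).$$ *)

theory Defs
  imports "HOL-Analysis.Analysis"
begin

definition riemann_node :: "real \<Rightarrow> real \<Rightarrow> nat \<Rightarrow> nat \<Rightarrow> real" where
  "riemann_node a b n i = a + real i * (b - a) / real n"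

definition riemann_A :: "(real \<Rightarrow> real) \<Rightarrow> real \<Rightarrow> real \<Rightarrow> nat \<Rightarrow> real" where
  "riemann_A f a b n = (b - a) / real n * (\<Sum>i=1..n. f (riemann_node a b n i))"

definition riemann_B :: "(real \<Rightarrow> real) \<Rightarrow> real \<Rightarrow> real \<Rightarrow> nat \<Rightarrow> real" where
  "riemann_B f a b n = (b - a) / real n * (\<Sum>i=0..<n. f (riemann_node a b n i))"

end

theory Submission
  imports Defs
begin

lemma node_in:
  assumes "a < b" "n \<ge> 1" "i \<le> n"
  shows "riemann_node a b n i \<in> {a..b}"
proof -
  have "real i * (b - a) / real n \<le> b - a"
    using assms by (simp add: divide_le_eq mult_right_mono)
  moreover have "0 \<le> real i * (b - a) / real n" using assms by simp
  ultimately show ?thesis by (simp add: riemann_node_def)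
qed

lemma node0: "riemann_node a b n 0 = a" by (simp add: riemann_node_def)
lemma noden: "n \<ge> 1 \<Longrightarrow> riemann_node a b n n = b" by (simp add: riemann_node_def)


lemma l1: fixes N x a h :: real assumes "N>0"
  shows "a + (x+1)*h/(N+1) = (1-(N-x)/(N+1))*(a + x*h/N) + (N-x)/(N+1)*(a+(x+1)*h/N)"
proof -
  have p: "N+1 \<noteq> 0" "N \<noteq> 0" using assms by auto
  show ?thesis using p by (simp add: divide_simps) algebra
qed
lemma l2: fixes N x a h :: real assumes "N>0"
  shows "a + x*h/N = (1 - x/N)*(a + x*h/(N+1)) + x/N*(a+(x+1)*h/(N+1))"
proof -
  have p: "N+1 \<noteq> 0" "N \<noteq> 0" using assms by auto
  show ?thesis using p by (simp add: divide_simps) algebra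
qed

lemma fin0: fixes N h S S' :: real assumes "N \<ge> 1" "h > 0" "N*S' \<le> (N+1)*S"
  shows "h/(N+1)*S' \<le> h/N*S"
proof -
  have nz: "N \<noteq> 0" "N+1 \<noteq> 0" using assms by auto
  have "h/(N+1)*S' = h*(N*S')/(N*(N+1))" using nz by (simp add: divide_simps)
  also have "\<dots> \<le> h*((N+1)*S)/(N*(N+1))"
    using assms by (intro divide_right_mono mult_left_mono) auto
  also have "\<dots> = h/N*S" using nz by (simp add: divide_simps)
  finally show ?thesis .
qed
lemma fin1: fixes N h S S' F0 :: real assumes "N \<ge> 1" "h > 0" "(N+1)*S' \<le> (N+2)*S + F0" "N*F0 \<le> S"
  shows "h/(N+1)*S' \<le> h/N*S"
proof (rule fin0[OF assms(1,2)])
  have "(N+1)*(N*S') = N*((N+1)*S')" by simp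
  also have "\<dots> \<le> N*((N+2)*S + F0)" using assms by (intro mult_left_mono) auto
  also have "\<dots> \<le> (N+1)*((N+1)*S)" using assms by (simp add: algebra_simps power2_eq_square)
  finally show "N*S' \<le> (N+1)*S" using assms by simp
qed
lemma fin2: fixes N h S S' fb :: real assumes "N \<ge> 1" "h > 0" "(N-1)*S' + fb \<le> N*S" "S' \<le> (N+1)*fb"
  shows "h/(N+1)*S' \<le> h/N*S"
proof (rule fin0[OF assms(1,2)])
  have "N*(N*S') = (N+1)*(N-1)*S' + S'" by (simp add: algebra_simps)
  also have "\<dots> \<le> (N+1)*(N-1)*S' + (N+1)*fb" using assms by simp
  also have "\<dots> = (N+1)*((N-1)*S' + fb)" by (simp add: algebra_simps)
  also have "\<dots> \<le> (N+1)*(N*S)" using assms by (intro mult_left_mono) auto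
  also have "\<dots> = N*((N+1)*S)" by simp
  finally show "N*S' \<le> (N+1)*S" using assms by simp
qed

lemma A_convex:
  assumes ab: "a < b" and mo: "mono_on {a..b} f" and cv: "convex_on {a..b} f" and n1: "n \<ge> 1"
  shows "riemann_A f a b (n + 1) \<le> riemann_A f a b n"
proof -
  define N where "N = real n"
  define h where "h = b - a"
  define F where "F = (\<lambda>j. f (riemann_node a b n j))"
  define G where "G = (\<lambda>j. f (riemann_node a b (n+1) j))"
  have Npos: "N \<ge> 1" using n1 by (simp add: N_def)
  have key: "G (Suc i) \<le> (real i + 1)/(N+1) * F i + (N - real i)/(N+1) * F (Suc i)" if "i \<le> n" for i
  proof (cases "i = n")
    case True
    then show ?thesis using Npos n1 noden[of "n+1" a b] noden[of n a b]
      by (simp add: G_def F_def N_def)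
  next
    case False
    then have that: "i < n" using that by simp
    define t where "t = (N - real i)/(N+1)"
    have t0: "0 \<le> t" using that by (simp add: t_def N_def)
    have t1: "t \<le> 1" using that Npos by (simp add: t_def)
    have eq: "riemann_node a b (n+1) (Suc i) = (1 - t) *\<^sub>R riemann_node a b n i + t *\<^sub>R riemann_node a b n (Suc i)"
      using l1[where N=N and x="real i" and a=a and h=h] Npos unfolding riemann_node_def t_def N_def h_def
      by (simp add: add.commute)
    have "1 - t = (real i + 1)/(N+1)" using Npos by (simp add: t_def field_simps)
    moreover have "f ((1 - t) *\<^sub>R riemann_node a b n i + t *\<^sub>R riemann_node a b n (Suc i)) \<le> (1 - t) * F i + t * F (Suc i)"
      unfolding F_def
      apply (rule convex_onD[OF cv t0 t1])
      using node_in[OF ab n1] that by auto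
    ultimately show ?thesis unfolding G_def eq t_def by simp
  qed
  define S where "S = (\<Sum>i=1..n. F i)"
  define S' where "S' = (\<Sum>i=1..n+1. G i)"
  define T where "T = (\<Sum>i=0..n. F i)"
  have S'eq: "S' = (\<Sum>i=0..n. G (Suc i))"
    unfolding S'_def using sum.shift_bounds_cl_Suc_ivl[of G 0 n] by simp
  have TS: "T = F 0 + S" unfolding T_def S_def by (simp add: sum.atLeast_Suc_atMost)
  define g where "g = (\<lambda>k. (N + 1 - real k)/(N+1) * F k)"
  have gs: "(\<Sum>i=0..n. (N - real i)/(N+1) * F (Suc i)) = (\<Sum>i=0..n. g (Suc i))"
    unfolding g_def by (intro sum.cong) (auto simp: algebra_simps)
  have "(\<Sum>k=0..Suc n. g k) = g 0 + (\<Sum>i=0..n. g (Suc i))" by (simp only: sum.atLeast0_atMost_Suc_shift comp_def)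
  moreover have "(\<Sum>k=0..Suc n. g k) = (\<Sum>k=0..n. g k) + g (Suc n)" by simp
  moreover have "g (Suc n) = 0" "g 0 = F 0" using Npos by (auto simp: g_def N_def)
  ultimately have gs2: "(\<Sum>i=0..n. g (Suc i)) = (\<Sum>k=0..n. g k) - F 0" by simp
  have "S' \<le> (\<Sum>i=0..n. (real i + 1)/(N+1) * F i + (N - real i)/(N+1) * F (Suc i))"
    unfolding S'eq by (intro sum_mono key) auto
  also have "\<dots> = (\<Sum>i=0..n. (real i + 1)/(N+1) * F i) + (\<Sum>k=0..n. g k) - F 0"
    unfolding sum.distrib gs gs2 by simp
  also have "(\<Sum>i=0..n. (real i + 1)/(N+1) * F i) + (\<Sum>k=0..n. g k) = (\<Sum>i=0..n. (N+2)/(N+1) * F i)"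
    unfolding sum.distrib[symmetric] g_def using Npos
    by (intro sum.cong refl) (simp add: divide_simps, simp add: algebra_simps)
  also have "\<dots> = (N+2)/(N+1) * T" by (simp add: T_def sum_distrib_left)
  finally have c1: "S' \<le> (N+2)/(N+1) * (F 0 + S) - F 0" by (simp add: TS)
  have c2: "(N+1)*S' \<le> (N+2)*S + F 0"
  proof -
    have "(N+1)*S' \<le> (N+1)*((N+2)/(N+1) * (F 0 + S) - F 0)" using c1 Npos by (intro mult_left_mono) auto
    also have "\<dots> = (N+2)*S + F 0" using Npos by (simp add: divide_simps) (simp add: algebra_simps)
    finally show ?thesis .
  qed
  have c3: "N * F 0 \<le> S"
  proof -
    have "(\<Sum>i=1..n. F 0) \<le> S" unfolding S_def F_def
    proof (intro sum_mono)
      fix i assume "i \<in> {1..n}"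
      then show "f (riemann_node a b n 0) \<le> f (riemann_node a b n i)"
        using node_in[OF ab n1] mono_onD[OF mo] by (auto simp: node0)
    qed
    then show ?thesis by (simp add: N_def)
  qed
  have "h/(N+1)*S' \<le> h/N*S" by (rule fin1[OF Npos _ c2 c3]) (simp add: h_def ab)
  then show ?thesis unfolding riemann_A_def S_def S'_def F_def G_def h_def N_def by (simp add: add.commute)
qed

lemma A_concave:
  assumes ab: "a < b" and mo: "mono_on {a..b} f" and cv: "concave_on {a..b} f" and n1: "n \<ge> 1"
  shows "riemann_A f a b (n + 1) \<le> riemann_A f a b n"
proof -
  define N where "N = real n"
  define h where "h = b - a"
  define F where "F = (\<lambda>j. f (riemann_node a b n j))"
  define G where "G = (\<lambda>j. f (riemann_node a b (n+1) j))"
  have Npos: "N \<ge> 1" using n1 by (simp add: N_def)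
  have n1': "n + 1 \<ge> 1" by simp
  have key: "(1 - real i/N) * G i + real i/N * G (Suc i) \<le> F i" if "i \<le> n" for i
  proof -
    define t where "t = real i/N"
    have t0: "0 \<le> t" using that by (simp add: t_def N_def)
    have t1: "t \<le> 1" using that Npos by (simp add: t_def N_def)
    have eq: "riemann_node a b n i = (1 - t) *\<^sub>R riemann_node a b (n+1) i + t *\<^sub>R riemann_node a b (n+1) (Suc i)"
      using l2[where N=N and x="real i" and a=a and h=h] Npos unfolding riemann_node_def t_def N_def h_def
      by (simp add: add.commute)
    have "f ((1 - t) *\<^sub>R riemann_node a b (n+1) i + t *\<^sub>R riemann_node a b (n+1) (Suc i)) \<ge> (1 - t) * G i + t * G (Suc i)"
      unfolding G_def
      apply (rule concave_onD[OF cv t0 t1])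
      using node_in[OF ab n1'] that by auto
    moreover have "F i = f ((1 - t) *\<^sub>R riemann_node a b (n+1) i + t *\<^sub>R riemann_node a b (n+1) (Suc i))"
      unfolding F_def using eq by metis
    ultimately show ?thesis unfolding t_def by simp
  qed
  define S where "S = (\<Sum>i=1..n. F i)"
  define S' where "S' = (\<Sum>i=1..n+1. G i)"
  define T where "T = (\<Sum>i=0..n. F i)"
  define fa where "fa = f a"
  define fb where "fb = f b"
  have G0: "G 0 = fa" by (simp add: G_def fa_def node0)
  have Gn: "G (Suc n) = fb" using noden[of "n+1" a b] by (simp add: G_def fb_def)
  have F0: "F 0 = fa" by (simp add: F_def fa_def node0)
  have TS: "T = fa + S" unfolding T_def S_def F0[symmetric] by (simp add: sum.atLeast_Suc_atMost)
  have S'S: "S' = (\<Sum>i=1..n. G i) + fb" unfolding S'_def Gn[symmetric] by simp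
  have GS: "(\<Sum>i=0..n. G i) = fa + (\<Sum>i=1..n. G i)" unfolding G0[symmetric] by (simp add: sum.atLeast_Suc_atMost)
  define g where "g = (\<lambda>k. (real k - 1)/N * G k)"
  have gs: "(\<Sum>i=0..n. real i/N * G (Suc i)) = (\<Sum>i=0..n. g (Suc i))"
    unfolding g_def by (intro sum.cong) (auto simp: algebra_simps)
  have "(\<Sum>k=0..Suc n. g k) = g 0 + (\<Sum>i=0..n. g (Suc i))" by (simp only: sum.atLeast0_atMost_Suc_shift comp_def)
  moreover have "(\<Sum>k=0..Suc n. g k) = (\<Sum>k=0..n. g k) + g (Suc n)" by simp
  moreover have "g (Suc n) = fb" "g 0 = - fa / N" using Npos by (auto simp: g_def N_def Gn G0)
  ultimately have gs2: "(\<Sum>i=0..n. g (Suc i)) = (\<Sum>k=0..n. g k) + fb + fa / N" by simp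
  have "T \<ge> (\<Sum>i=0..n. (1 - real i/N) * G i + real i/N * G (Suc i))"
    unfolding T_def by (intro sum_mono key) auto
  moreover have "(\<Sum>i=0..n. (1 - real i/N) * G i + real i/N * G (Suc i))
      = (\<Sum>i=0..n. (1 - real i/N) * G i) + (\<Sum>k=0..n. g k) + fb + fa / N"
    unfolding sum.distrib gs gs2 by simp
  moreover have "(\<Sum>i=0..n. (1 - real i/N) * G i) + (\<Sum>k=0..n. g k) = (\<Sum>i=0..n. (1 - 1/N) * G i)"
    unfolding sum.distrib[symmetric] g_def using Npos
    by (intro sum.cong refl) (simp add: divide_simps, simp add: algebra_simps)
  moreover have "(\<Sum>i=0..n. (1 - 1/N) * G i) = (1 - 1/N) * (fa + S' - fb)"
    by (simp add: sum_distrib_left[symmetric] GS S'S)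
  ultimately have c1: "fa + S \<ge> (1 - 1/N) * (fa + S' - fb) + fb + fa / N" by (simp add: TS)
  have c2: "(N-1)*S' + fb \<le> N*S"
  proof -
    have "N * ((1 - 1/N) * (fa + S' - fb) + fb + fa / N) \<le> N * (fa + S)" using c1 Npos by (intro mult_left_mono) auto
    moreover have "N * ((1 - 1/N) * (fa + S' - fb) + fb + fa / N) = (N-1)*S' + fb + N * fa"
      using Npos by (simp add: divide_simps) (simp add: algebra_simps)
    ultimately show ?thesis by (simp add: algebra_simps)
  qed
  have c3: "S' \<le> (N+1) * fb"
  proof -
    have "S' \<le> (\<Sum>i=1..n+1. fb)" unfolding S'_def G_def fb_def
    proof (intro sum_mono)
      fix i assume "i \<in> {1..n+1}"
      then show "f (riemann_node a b (n+1) i) \<le> f b"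
        using node_in[OF ab n1'] mono_onD[OF mo] ab by auto
    qed
    then show ?thesis by (simp add: N_def add.commute)
  qed
  have "h/(N+1)*S' \<le> h/N*S" by (rule fin2[OF Npos _ c2 c3]) (simp add: h_def ab)
  then show ?thesis unfolding riemann_A_def S_def S'_def F_def G_def h_def N_def by (simp add: add.commute)
qed

lemma convex_reflect:
  fixes p :: "real \<Rightarrow> real"
  assumes cv: "convex_on {a..b} p"
  shows "convex_on {a..b} (\<lambda>x. p (a + b - x))"
proof (rule convex_onI)
  fix t x y :: real assume t: "t > 0" "t < 1" and xy: "x \<in> {a..b}" "y \<in> {a..b}"
  have "a + b - ((1 - t) *\<^sub>R x + t *\<^sub>R y) = (1 - t) *\<^sub>R (a + b - x) + t *\<^sub>R (a + b - y)"
    by (simp add: algebra_simps)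
  moreover have "p ((1 - t) *\<^sub>R (a + b - x) + t *\<^sub>R (a + b - y)) \<le> (1 - t) * p (a + b - x) + t * p (a + b - y)"
    using xy t by (intro convex_onD[OF cv]) auto
  ultimately show "p (a + b - ((1 - t) *\<^sub>R x + t *\<^sub>R y)) \<le> (1 - t) * p (a + b - x) + t * p (a + b - y)"
    by simp
qed (rule convex_real_interval)

lemma B_eq:
  assumes "n \<ge> 1"
  shows "riemann_B f a b n = - riemann_A (\<lambda>x. - f (a + b - x)) a b n"
proof -
  have nd: "a + b - riemann_node a b n (Suc k) = riemann_node a b n (n - Suc k)" if "k < n" for k
    using that assms unfolding riemann_node_def by (simp add: of_nat_diff field_simps)
  have "(\<Sum>i=1..n. - f (a + b - riemann_node a b n i)) = (\<Sum>k<n. - f (a + b - riemann_node a b n (Suc k)))"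
    by (simp only: sum.atLeast1_atMost_eq One_nat_def)
  also have "\<dots> = (\<Sum>k<n. - f (riemann_node a b n (n - Suc k)))"
    by (intro sum.cong refl) (simp add: nd)
  also have "\<dots> = (\<Sum>k<n. - f (riemann_node a b n k))"
    by (rule sum.nat_diff_reindex)
  finally show ?thesis unfolding riemann_A_def riemann_B_def
    by (simp add: atLeast0LessThan sum_negf)
qed

theorem corollary2p2:
  fixes f :: "real \<Rightarrow> real" and a b :: real and n :: nat
  assumes "a < b"
    and "mono_on {a..b} f"
    and "convex_on {a..b} f \<or> concave_on {a..b} f"
    and "n \<ge> 1"
  shows "riemann_A f a b (n + 1) \<le> riemann_A f a b n \<and> riemann_B f a b n \<le> riemann_B f a b (n + 1)"
proof
  show "riemann_A f a b (n + 1) \<le> riemann_A f a b n"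
    using assms A_convex A_concave by blast
next
  define g where "g = (\<lambda>x. - f (a + b - x))"
  have mg: "mono_on {a..b} g"
  proof (rule mono_onI)
    fix x y assume "x \<in> {a..b}" "y \<in> {a..b}" "x \<le> y"
    then show "g x \<le> g y" unfolding g_def using mono_onD[OF assms(2)] by auto
  qed
  have cg: "convex_on {a..b} g \<or> concave_on {a..b} g"
    using assms(3)
  proof
    assume "convex_on {a..b} f"
    then have "convex_on {a..b} (\<lambda>x. f (a + b - x))" by (rule convex_reflect)
    then show ?thesis by (simp add: g_def concave_on_def)
  next
    assume "concave_on {a..b} f"
    then have "convex_on {a..b} (\<lambda>x. - f x)" by (simp add: concave_on_def)
    then have "convex_on {a..b} (\<lambda>x. - f (a + b - x))" by (rule convex_reflect[where p = "\<lambda>x. - f x"])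
    then show ?thesis by (simp add: g_def)
  qed
  have "riemann_A g a b (n + 1) \<le> riemann_A g a b n"
    using assms(1,4) mg cg A_convex A_concave by blast
  then show "riemann_B f a b n \<le> riemann_B f a b (n + 1)"
    using B_eq[of n f a b] B_eq[of "n+1" f a b] assms(4) unfolding g_def by simp
qed
end
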